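(* Consider the CDM model and a boundary or trivial equilibrium $\bm{\hat{y}}$ of its age-structured map, with adult part $\bm{\hat{x}}$ such that $\hat x_i=0$ for $i\in Z$ (a nonempty subset of $\mathcal{M}$) and $\hat x_i>0$ for $i\in\mathcal{M}\setminus Z$. Assume the principal submatrix $\bm{J}^\bullet$ of the Jacobian of the map at $\bm{\hat{y}}$ indexed by all age classes of the species in $\mathcal{M}\setminus Z$ satisfies $\rho(\bm{J}^\bullet)<1$ (e.g. guaranteed by Proposition 1's condition for the subsystem; vacuous if $Z=\mathcal{M}$). If $$\frac{\tilde\lambda_i-z_i}{z_i} < q_i^{-1}\sum_{k\in\mathcal{M}\setminus Z}A_{ik}\hat{x}_k\quad\text{for all } i\in Z$$ (the empty sum being $0$ in the trivial case $Z=\mathcal{M}$), then the Jacobian of the map at $\bm{\hat{y}}$ has spectral radius less than $1$, i.e. $\bm{\hat{y}}$ is locally asymptotically stable.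
   Context: CDM model: $m\ge1$ species $\mathcal{M}=\{1,\dots,m\}$, delays $\delta_i\in\{0,1,\dots\}$, survival probabilities $\sigma_{a\mid i}\in(0,1]$ ($a<\delta_i$), adult survival $\sigma_{\delta_i\mid i}\in(0,1)$, $z_i=1-\sigma_{\delta_i\mid i}$, fecundity $\lambda_i>0$, $\tilde\lambda_i=\lambda_i\prod_{a=0}^{\delta_i-1}\sigma_{a\mid i}$ (empty product $=1$), $\bm{A}\ge\bm{0}$ with positive diagonal, $\bm{q}>\bm{0}$. Per capita growth $G_i(\bm{x})=\lambda_i/(1+q_i^{-1}\sum_kA_{ik}x_k)$. Age-structured map $h$ on $\bm{y}=(y_{a\mid i})$, $0\le a\le\delta_i$, with adults $\bm{x}=(y_{\delta_1\mid1},\dots,y_{\delta_m\mid m})^\top$: if $\delta_i>0$, $h_{0\mid i}(\bm{y})=G_i(\bm{x})y_{\delta_i\mid i}$, $h_{a\mid i}(\bm{y})=\sigma_{a-1\mid i}y_{a-1\mid i}$ ($1\le a\le\delta_i-1$), $h_{\delta_i\mid i}(\bm{y})=\sigma_{\delta_i-1\mid i}y_{\delta_i-1\mid i}+\sigma_{\delta_i\mid i}y_{\delta_i\mid i}$; if $\delta_i=0$, $h_{0\mid i}(\bm{y})=\sigma_{0\mid i}y_{0\mid i}+G_i(\bm{x})y_{0\mid i}$. $\rho$ denotes spectral radius. *)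

theory Defs
  imports Complex_Main "Jordan_Normal_Form.Spectral_Radius"
begin

text \<open>Species are indexed by 0..<m (paper: 1..m).
  A state y assigns to every age/species index (a,i) (with i < m, a \<le> \<delta> i)
  the density y_{a|i}; values outside this index set are irrelevant.
  Parameters: sig a i = \<sigma>_{a|i}, lam i = \<lambda>_i, A i k = A_{ik}, q i = q_i.\<close>

definition cdm_G :: "nat \<Rightarrow> (nat \<Rightarrow> real) \<Rightarrow> (nat \<Rightarrow> nat \<Rightarrow> real) \<Rightarrow> (nat \<Rightarrow> real)
    \<Rightarrow> nat \<Rightarrow> (nat \<Rightarrow> real) \<Rightarrow> real" where
  "cdm_G m lam A q i x = lam i / (1 + (\<Sum>k<m. A i k * x k) / q i)"

definition cdm_adults :: "(nat \<Rightarrow> nat) \<Rightarrow> (nat \<times> nat \<Rightarrow> real) \<Rightarrow> nat \<Rightarrow> real" where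
  "cdm_adults \<delta> y = (\<lambda>k. y (\<delta> k, k))"

definition cdm_h :: "nat \<Rightarrow> (nat \<Rightarrow> nat) \<Rightarrow> (nat \<Rightarrow> nat \<Rightarrow> real) \<Rightarrow> (nat \<Rightarrow> real)
    \<Rightarrow> (nat \<Rightarrow> nat \<Rightarrow> real) \<Rightarrow> (nat \<Rightarrow> real) \<Rightarrow> (nat \<times> nat \<Rightarrow> real) \<Rightarrow> nat \<times> nat \<Rightarrow> real" where
  "cdm_h m \<delta> sig lam A q y = (\<lambda>(a, i).
     (let G = cdm_G m lam A q i (cdm_adults \<delta> y) in
      if \<delta> i = 0 then
        (if a = 0 then sig 0 i * y (0, i) + G * y (0, i) else 0)
      else if a = 0 then G * y (\<delta> i, i)
      else if a < \<delta> i then sig (a - 1) i * y (a - 1, i)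
      else if a = \<delta> i then sig (a - 1) i * y (a - 1, i) + sig (\<delta> i) i * y (\<delta> i, i)
      else 0))"

definition deriv0 :: "(real \<Rightarrow> real) \<Rightarrow> real" where
  "deriv0 f = (SOME D. DERIV f 0 :> D)"

definition cdm_jac :: "nat \<Rightarrow> (nat \<Rightarrow> nat) \<Rightarrow> (nat \<Rightarrow> nat \<Rightarrow> real) \<Rightarrow> (nat \<Rightarrow> real)
    \<Rightarrow> (nat \<Rightarrow> nat \<Rightarrow> real) \<Rightarrow> (nat \<Rightarrow> real) \<Rightarrow> (nat \<times> nat \<Rightarrow> real)
    \<Rightarrow> nat \<times> nat \<Rightarrow> nat \<times> nat \<Rightarrow> real" where
  "cdm_jac m \<delta> sig lam A q y r c =
     deriv0 (\<lambda>t. cdm_h m \<delta> sig lam A q (y(c := y c + t)) r)"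

definition cdm_idx :: "nat \<Rightarrow> (nat \<Rightarrow> nat) \<Rightarrow> nat set \<Rightarrow> (nat \<times> nat) list" where
  "cdm_idx m \<delta> S = concat (map (\<lambda>i. map (\<lambda>a. (a, i)) [0..<Suc (\<delta> i)]) (filter (\<lambda>i. i \<in> S) [0..<m]))"

definition cdm_jac_mat :: "nat \<Rightarrow> (nat \<Rightarrow> nat) \<Rightarrow> (nat \<Rightarrow> nat \<Rightarrow> real) \<Rightarrow> (nat \<Rightarrow> real)
    \<Rightarrow> (nat \<Rightarrow> nat \<Rightarrow> real) \<Rightarrow> (nat \<Rightarrow> real) \<Rightarrow> (nat \<times> nat \<Rightarrow> real) \<Rightarrow> nat set \<Rightarrow> complex mat" where
  "cdm_jac_mat m \<delta> sig lam A q y S =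
     (let ix = cdm_idx m \<delta> S in
      mat (length ix) (length ix)
        (\<lambda>(r, c). complex_of_real (cdm_jac m \<delta> sig lam A q y (ix ! r) (ix ! c))))"

end

theory Submission
  imports Defs
begin


lemma sum_reix:
  assumes "distinct ix"
  shows "(\<Sum>p\<in>set ix. g p) = (\<Sum>c\<in>{0..<length ix}. g (ix ! c))"
proof -
  have "inj_on (nth ix) {0..<length ix}" using assms by (intro inj_on_nth) auto
  moreover have "nth ix ` {0..<length ix} = set ix" by (auto simp: set_conv_nth)
  ultimately show ?thesis by (metis sum.reindex comp_apply sum.cong)
qed

lemma eig_to_fun:
  fixes f :: "'a \<Rightarrow> 'a \<Rightarrow> complex" and ix :: "'a list"
  assumes dist: "distinct ix"
    and ev: "eigenvector (mat (length ix) (length ix) (\<lambda>(r,c). f (ix!r) (ix!c))) v e"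
  shows "\<exists>u. (\<exists>p\<in>set ix. u p \<noteq> 0) \<and> (\<forall>p\<in>set ix. (\<Sum>p'\<in>set ix. f p p' * u p') = e * u p)"
proof -
  let ?n = "length ix"
  let ?M = "mat (length ix) (length ix) (\<lambda>(r,c). f (ix!r) (ix!c))"
  define u where "u p = (\<Sum>r<?n. if ix!r = p then v$r else 0)" for p
  have uc: "u (ix!c) = v$c" if "c < ?n" for c
  proof -
    have "u (ix!c) = (\<Sum>r<?n. if r = c then v$r else 0)"
      unfolding u_def using dist that by (intro sum.cong) (auto simp: nth_eq_iff_index_eq)
    also have "\<dots> = v$c" using that by simp
    finally show ?thesis .
  qed
  from ev have v: "v \<in> carrier_vec ?n" "v \<noteq> 0\<^sub>v ?n" "?M *\<^sub>v v = e \<cdot>\<^sub>v v"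
    unfolding eigenvector_def by auto
  from v obtain r where r: "r < ?n" "v$r \<noteq> 0" by (auto simp: vec_eq_iff)
  have ex: "\<exists>p\<in>set ix. u p \<noteq> 0" using r uc by (intro bexI[of _ "ix!r"]) auto
  have eq: "(\<Sum>p'\<in>set ix. f p p' * u p') = e * u p" if p: "p \<in> set ix" for p
  proof -
    from p obtain r where r: "r < ?n" "p = ix!r" by (auto simp: set_conv_nth)
    have "(\<Sum>p'\<in>set ix. f p p' * u p') = (\<Sum>c\<in>{0..<?n}. f p (ix!c) * u (ix!c))"
      by (rule sum_reix[OF dist])
    also have "\<dots> = (\<Sum>c\<in>{0..<?n}. f p (ix!c) * v$c)" using uc by (intro sum.cong) auto
    also have "\<dots> = (?M *\<^sub>v v) $ r" using r v(1)
      by (simp add: scalar_prod_def row_def)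
    also have "\<dots> = e * v$r" using v(3) r v(1) by simp
    also have "\<dots> = e * u p" using uc r by simp
    finally show ?thesis .
  qed
  show ?thesis using ex eq by blast
qed

lemma fun_to_eig:
  fixes f :: "'a \<Rightarrow> 'a \<Rightarrow> complex" and ix :: "'a list"
  assumes dist: "distinct ix"
    and ex: "\<exists>p\<in>set ix. u p \<noteq> 0"
    and eq: "\<forall>p\<in>set ix. (\<Sum>p'\<in>set ix. f p p' * u p') = e * u p"
  shows "eigenvalue (mat (length ix) (length ix) (\<lambda>(r,c). f (ix!r) (ix!c))) e"
proof -
  let ?n = "length ix"
  let ?M = "mat (length ix) (length ix) (\<lambda>(r,c). f (ix!r) (ix!c))"
  define v where "v = vec ?n (\<lambda>r. u (ix!r))"
  have "v \<in> carrier_vec ?n" unfolding v_def by simp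
  moreover have "v \<noteq> 0\<^sub>v ?n" using ex unfolding v_def
    by (auto simp: vec_eq_iff set_conv_nth)
  moreover have "?M *\<^sub>v v = e \<cdot>\<^sub>v v"
  proof (rule eq_vecI)
    fix r assume r: "r < dim_vec (e \<cdot>\<^sub>v v)"
    hence r': "r < ?n" unfolding v_def by simp
    have "(?M *\<^sub>v v) $ r = (\<Sum>c\<in>{0..<?n}. f (ix!r) (ix!c) * u (ix!c))"
      using r' by (simp add: scalar_prod_def row_def v_def)
    also have "\<dots> = (\<Sum>p'\<in>set ix. f (ix!r) p' * u p')" by (rule sum_reix[OF dist, symmetric])
    also have "\<dots> = e * u (ix!r)" using eq r' by auto
    finally show "(?M *\<^sub>v v) $ r = (e \<cdot>\<^sub>v v) $ r" using r' by (simp add: v_def)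
  qed (simp add: v_def)
  ultimately show ?thesis unfolding eigenvalue_def eigenvector_def by auto
qed

lemma set_idx: "set (cdm_idx m \<delta> S) = {(a,i). i < m \<and> i \<in> S \<and> a \<le> \<delta> i}"
  unfolding cdm_idx_def by (auto simp: image_iff simp del: upt_Suc)

lemma distinct_idx: "distinct (cdm_idx m \<delta> S)"
proof (induction m)
  case 0 then show ?case by (simp add: cdm_idx_def)
next
  case (Suc m)
  have eq: "cdm_idx (Suc m) \<delta> S = cdm_idx m \<delta> S @ (if m \<in> S then map (\<lambda>a. (a, m)) [0..<Suc (\<delta> m)] else [])"
    by (simp add: cdm_idx_def)
  show ?case unfolding eq using Suc by (auto simp: set_idx distinct_map inj_on_def)
qed



lemma deriv0_eq: "DERIV f 0 :> D \<Longrightarrow> deriv0 f = D"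
  unfolding deriv0_def by (rule some_equality) (auto intro: DERIV_unique)

lemma dy: "DERIV (\<lambda>t. (y(c := y c + t)) p) 0 :> (if p = c then 1 else 0)"
proof (cases "p = c")
  case True
  have "DERIV (\<lambda>t. y c + t) 0 :> 1" by (auto intro!: derivative_eq_intros)
  then show ?thesis using True by simp
next
  case False then show ?thesis by simp
qed

lemma G_upd: "cdm_G m lam A q i (cdm_adults \<delta> (y(c := y c + t))) =
   lam i / (1 + ((\<Sum>k<m. A i k * y (\<delta> k, k)) + t * (\<Sum>k<m. A i k * (if (\<delta> k, k) = c then 1 else 0))) / q i)"
proof -
  have "(\<Sum>k<m. A i k * (y(c := y c + t)) (\<delta> k, k)) =
     (\<Sum>k<m. A i k * y (\<delta> k, k) + t * (A i k * (if (\<delta> k, k) = c then 1 else 0)))"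
    by (intro sum.cong) (auto simp: algebra_simps)
  then show ?thesis unfolding cdm_G_def cdm_adults_def by (simp add: sum.distrib sum_distrib_left)
qed

lemma g_diff: assumes "1 + S0 / qi \<noteq> (0::real)"
  shows "\<exists>Dg. DERIV (\<lambda>t. L / (1 + (S0 + t * B) / qi)) 0 :> Dg"
proof -
  have "DERIV (\<lambda>t. 1 + (S0 + t * B) / qi) 0 :> (0 + (0 + 1 * B) / qi)"
    by (intro DERIV_add DERIV_const DERIV_cdivide DERIV_cmult_right DERIV_ident)
  then have "DERIV (\<lambda>t. L / (1 + (S0 + t * B) / qi)) 0 :>
     ((0 * (1 + (S0 + 0 * B) / qi) - L * (0 + (0 + 1 * B) / qi)) / ((1 + (S0 + 0 * B) / qi) * (1 + (S0 + 0 * B) / qi)))"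
    using assms by (intro DERIV_divide DERIV_const) auto
  then show ?thesis by blast
qed

lemma jac_Z:
  assumes i: "i < m" and y0: "y (\<delta> i, i) = 0" and qi: "q i > 0"
    and S0: "(\<Sum>k<m. A i k * y (\<delta> k, k)) \<ge> 0" and a: "a \<le> \<delta> i"
  shows "cdm_jac m \<delta> sig lam A q y (a, i) c =
    (if \<delta> i = 0 then (if c = (0, i) then sig 0 i + cdm_G m lam A q i (cdm_adults \<delta> y) else 0)
     else if a = 0 then (if c = (\<delta> i, i) then cdm_G m lam A q i (cdm_adults \<delta> y) else 0)
     else if a < \<delta> i then (if c = (a - 1, i) then sig (a - 1) i else 0)
     else (if c = (a - 1, i) then sig (a - 1) i else 0) + (if c = (\<delta> i, i) then sig (\<delta> i) i else 0))"
proof -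
  define S where "S = (\<Sum>k<m. A i k * y (\<delta> k, k))"
  define B where "B = (\<Sum>k<m. A i k * (if (\<delta> k, k) = c then 1 else (0::real)))"
  define g where "g t = lam i / (1 + (S + t * B) / q i)" for t
  define Y where "Y t = y(c := y c + t)" for t
  have gG: "cdm_G m lam A q i (cdm_adults \<delta> (Y t)) = g t" for t
    unfolding Y_def g_def S_def B_def by (rule G_upd)
  have Y0: "Y 0 = y" unfolding Y_def by simp
  have g0: "g 0 = cdm_G m lam A q i (cdm_adults \<delta> y)" using gG[of 0] Y0 by simp
  have "1 + S / q i \<noteq> 0" using S0 qi unfolding S_def
    by (metis add_pos_nonneg divide_nonneg_pos less_numeral_extra(1) less_numeral_extra(3))
  from g_diff[OF this] obtain Dg where Dg: "DERIV g 0 :> Dg" unfolding g_def by blast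
  have dY: "DERIV (\<lambda>t. Y t p) 0 :> (if p = c then 1 else 0)" for p unfolding Y_def by (rule dy)
  have jac: "cdm_jac m \<delta> sig lam A q y (a, i) c = deriv0 (\<lambda>t. cdm_h m \<delta> sig lam A q (Y t) (a, i))"
    unfolding cdm_jac_def Y_def by simp
  show ?thesis
  proof (cases "\<delta> i = 0")
    case True
    then have a0: "a = 0" using a by simp
    have f: "(\<lambda>t. cdm_h m \<delta> sig lam A q (Y t) (a, i)) = (\<lambda>t. sig 0 i * Y t (0, i) + g t * Y t (0, i))"
      using True a0 by (simp add: cdm_h_def gG Let_def)
    have "DERIV (\<lambda>t. sig 0 i * Y t (0, i) + g t * Y t (0, i)) 0 :>
        sig 0 i * (if (0, i) = c then 1 else 0) + (Dg * Y 0 (0, i) + (if (0, i) = c then 1 else 0) * g 0)"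
      by (intro DERIV_add DERIV_cmult DERIV_mult Dg dY)
    then show ?thesis unfolding jac f using True y0 Y0 g0 by (auto dest!: deriv0_eq)
  next
    case False
    note F = False
    show ?thesis
    proof (cases "a = 0")
      case True
      have f: "(\<lambda>t. cdm_h m \<delta> sig lam A q (Y t) (a, i)) = (\<lambda>t. g t * Y t (\<delta> i, i))"
        using True F by (simp add: cdm_h_def gG Let_def)
      have "DERIV (\<lambda>t. g t * Y t (\<delta> i, i)) 0 :>
          (Dg * Y 0 (\<delta> i, i) + (if (\<delta> i, i) = c then 1 else 0) * g 0)"
        by (intro DERIV_mult Dg dY)
      then show ?thesis unfolding jac f using True F y0 Y0 g0 by (auto dest!: deriv0_eq)
    next
      case a0: False
      show ?thesis
      proof (cases "a < \<delta> i")
        case True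
        have f: "(\<lambda>t. cdm_h m \<delta> sig lam A q (Y t) (a, i)) = (\<lambda>t. sig (a - 1) i * Y t (a - 1, i))"
          using True F a0 by (simp add: cdm_h_def gG Let_def)
        have "DERIV (\<lambda>t. sig (a - 1) i * Y t (a - 1, i)) 0 :>
            sig (a - 1) i * (if (a - 1, i) = c then 1 else 0)"
          by (intro DERIV_cmult dY)
        then show ?thesis unfolding jac f using True F a0 by (auto dest!: deriv0_eq)
      next
        case False
        then have ad: "a = \<delta> i" using a by simp
        have f: "(\<lambda>t. cdm_h m \<delta> sig lam A q (Y t) (a, i)) =
           (\<lambda>t. sig (a - 1) i * Y t (a - 1, i) + sig (\<delta> i) i * Y t (\<delta> i, i))"
          using ad F a0 by (simp add: cdm_h_def gG Let_def)
        have "DERIV (\<lambda>t. sig (a - 1) i * Y t (a - 1, i) + sig (\<delta> i) i * Y t (\<delta> i, i)) 0 :>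
            sig (a - 1) i * (if (a - 1, i) = c then 1 else 0) + sig (\<delta> i) i * (if (\<delta> i, i) = c then 1 else 0)"
          by (intro DERIV_add DERIV_cmult dY)
        then show ?thesis unfolding jac f using ad F a0 by (auto dest!: deriv0_eq)
      qed
    qed
  qed
qed



lemma leslie:
  fixes ev :: complex and u :: "nat \<Rightarrow> complex" and s :: "nat \<Rightarrow> real" and G :: real
  assumes d: "d > 0"
    and r0: "ev * u 0 = of_real G * u d"
    and ra: "\<And>a. 0 < a \<Longrightarrow> a < d \<Longrightarrow> ev * u a = of_real (s (a - 1)) * u (a - 1)"
    and rd: "ev * u d = of_real (s (d - 1)) * u (d - 1) + of_real (s d) * u d"
    and nz: "\<exists>a\<le>d. u a \<noteq> 0"
    and s: "\<And>a. a < d \<Longrightarrow> s a \<ge> 0" and sd: "s d \<ge> 0" and G: "G \<ge> 0"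
    and cond: "G * (\<Prod>a<d. s a) + s d < 1"
  shows "norm ev < 1"
proof (rule ccontr)
  assume "\<not> norm ev < 1"
  then have ge: "norm ev \<ge> 1" by simp
  then have ev0: "ev \<noteq> 0" by auto
  have form: "u a = of_real (G * (\<Prod>j<a. s j)) * u d / ev ^ (a + 1)" if "a < d" for a
    using that
  proof (induction a)
    case 0
    then show ?case using r0 ev0 by (simp add: field_simps)
  next
    case (Suc a)
    have "ev * u (Suc a) = of_real (s a) * u a" using ra[of "Suc a"] Suc.prems by simp
    also have "u a = of_real (G * (\<Prod>j<a. s j)) * u d / ev ^ (a + 1)" using Suc by simp
    finally have "u (Suc a) = of_real (s a) * (of_real (G * (\<Prod>j<a. s j)) * u d / ev ^ (a + 1)) / ev"
      using ev0 by (simp add: field_simps)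
    then show ?case using ev0 by (simp add: field_simps)
  qed
  define C where "C = G * (\<Prod>j<d. s j)"
  have C0: "C \<ge> 0" unfolding C_def using G s by (intro mult_nonneg_nonneg prod_nonneg) auto
  have ud: "u d \<noteq> 0"
  proof
    assume "u d = 0"
    then have "u a = 0" if "a \<le> d" for a using form that by (cases "a = d") auto
    then show False using nz by auto
  qed
  have "ev * u d = of_real (s (d - 1)) * (of_real (G * (\<Prod>j<d - 1. s j)) * u d / ev ^ d) + of_real (s d) * u d"
    using rd form[of "d - 1"] d by simp
  also have "of_real (s (d - 1)) * (of_real (G * (\<Prod>j<d - 1. s j)) * u d / ev ^ d) = of_real C * u d / ev ^ d"
  proof -
    have "(\<Prod>j<d. s j) = (\<Prod>j<Suc (d - 1). s j)" using d by simp
    also have "\<dots> = (\<Prod>j<d - 1. s j) * s (d - 1)" by (rule prod.lessThan_Suc)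
    finally show ?thesis unfolding C_def by (simp add: field_simps)
  qed
  finally have "ev * u d = of_real C * u d / ev ^ d + of_real (s d) * u d" .
  then have "ev * u d = (of_real C / ev ^ d + of_real (s d)) * u d" by (simp add: algebra_simps)
  then have "ev = of_real C / ev ^ d + of_real (s d)" using ud by simp
  then have eq: "ev ^ d * (ev - of_real (s d)) = of_real C" using ev0 by (simp add: field_simps)
  have "norm (ev - of_real (s d)) \<ge> norm ev - s d"
    using norm_triangle_ineq2[of ev "of_real (s d)"] sd by simp
  then have n1: "norm (ev - of_real (s d)) > C" using ge cond unfolding C_def by linarith
  have n2: "norm (ev ^ d) \<ge> 1" using ge by (simp add: norm_power one_le_power)
  have "norm (ev ^ d * (ev - of_real (s d))) \<ge> 1 * norm (ev - of_real (s d))"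
    unfolding norm_mult using n2 by (intro mult_right_mono) auto
  then have "norm (ev ^ d * (ev - of_real (s d))) > C" using n1 by simp
  then show False using eq C0 by simp
qed



lemma sum_pt: "finite I \<Longrightarrow> c \<in> I \<Longrightarrow>
  (\<Sum>p\<in>I. complex_of_real (if p = c then \<alpha> else 0) * u p) = of_real \<alpha> * u c"
proof -
  assume "finite I" "c \<in> I"
  have "(\<Sum>p\<in>I. complex_of_real (if p = c then \<alpha> else 0) * u p) = (\<Sum>p\<in>I. if p = c then of_real \<alpha> * u c else 0)"
    by (intro sum.cong) auto
  then show ?thesis using \<open>finite I\<close> \<open>c \<in> I\<close> by simp
qed

lemma sum_pt2: "finite I \<Longrightarrow> c1 \<in> I \<Longrightarrow> c2 \<in> I \<Longrightarrow>
  (\<Sum>p\<in>I. complex_of_real ((if p = c1 then \<alpha> else 0) + (if p = c2 then \<beta> else 0)) * u p)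
     = of_real \<alpha> * u c1 + of_real \<beta> * u c2"
proof -
  assume *: "finite I" "c1 \<in> I" "c2 \<in> I"
  have "(\<Sum>p\<in>I. complex_of_real ((if p = c1 then \<alpha> else 0) + (if p = c2 then \<beta> else 0)) * u p)
    = (\<Sum>p\<in>I. complex_of_real (if p = c1 then \<alpha> else 0) * u p) + (\<Sum>p\<in>I. complex_of_real (if p = c2 then \<beta> else 0) * u p)"
    by (subst sum.distrib[symmetric]) (intro sum.cong, auto simp: distrib_right)
  then show ?thesis using * by (simp add: sum_pt)
qed

theorem corollary1:
  fixes m :: nat and \<delta> :: "nat \<Rightarrow> nat" and sig :: "nat \<Rightarrow> nat \<Rightarrow> real"
    and lam :: "nat \<Rightarrow> real" and A :: "nat \<Rightarrow> nat \<Rightarrow> real" and q :: "nat \<Rightarrow> real"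
    and Z :: "nat set" and y :: "nat \<times> nat \<Rightarrow> real"
  assumes m: "m \<ge> 1"
    and sig_juv: "\<And>i a. i < m \<Longrightarrow> a < \<delta> i \<Longrightarrow> 0 < sig a i \<and> sig a i \<le> 1"
    and sig_ad: "\<And>i. i < m \<Longrightarrow> 0 < sig (\<delta> i) i \<and> sig (\<delta> i) i < 1"
    and lam: "\<And>i. i < m \<Longrightarrow> lam i > 0"
    and A_nonneg: "\<And>i k. i < m \<Longrightarrow> k < m \<Longrightarrow> A i k \<ge> 0"
    and A_diag: "\<And>i. i < m \<Longrightarrow> A i i > 0"
    and q: "\<And>i. i < m \<Longrightarrow> q i > 0"
    and equil: "\<And>a i. i < m \<Longrightarrow> a \<le> \<delta> i \<Longrightarrow> cdm_h m \<delta> sig lam A q y (a, i) = y (a, i)"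
    and Z: "Z \<subseteq> {..<m}" "Z \<noteq> {}"
    and zero: "\<And>i. i \<in> Z \<Longrightarrow> y (\<delta> i, i) = 0"
    and pos: "\<And>i. i < m \<Longrightarrow> i \<notin> Z \<Longrightarrow> y (\<delta> i, i) > 0"
    and sub: "{..<m} - Z \<noteq> {} \<Longrightarrow>
              spectral_radius (cdm_jac_mat m \<delta> sig lam A q y ({..<m} - Z)) < 1"
    and cond: "\<And>i. i \<in> Z \<Longrightarrow>
              (lam i * (\<Prod>a<\<delta> i. sig a i) - (1 - sig (\<delta> i) i)) / (1 - sig (\<delta> i) i)
                < (\<Sum>k\<in>{..<m} - Z. A i k * y (\<delta> k, k)) / q i"
  shows "spectral_radius (cdm_jac_mat m \<delta> sig lam A q y {..<m}) < 1"
proof -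
  define f where "f p p' = complex_of_real (cdm_jac m \<delta> sig lam A q y p p')" for p p'
  define ix where "ix = cdm_idx m \<delta> {..<m}"
  define ixS where "ixS = cdm_idx m \<delta> ({..<m} - Z)"
  define M where "M = cdm_jac_mat m \<delta> sig lam A q y {..<m}"
  define MS where "MS = cdm_jac_mat m \<delta> sig lam A q y ({..<m} - Z)"
  have Mf: "M = mat (length ix) (length ix) (\<lambda>(r,c). f (ix!r) (ix!c))"
    unfolding M_def cdm_jac_mat_def ix_def f_def Let_def by simp
  have MSf: "MS = mat (length ixS) (length ixS) (\<lambda>(r,c). f (ixS!r) (ixS!c))"
    unfolding MS_def cdm_jac_mat_def ixS_def f_def Let_def by simp
  have I: "set ix = {(a,i). i < m \<and> a \<le> \<delta> i}" unfolding ix_def set_idx by auto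
  have IS: "set ixS = {(a,i). i < m \<and> i \<notin> Z \<and> a \<le> \<delta> i}" unfolding ixS_def set_idx by auto
  have dix: "distinct ix" "distinct ixS" unfolding ix_def ixS_def by (auto intro: distinct_idx)
  have n: "length ix > 0" using I m by (cases ix) auto
  have Mc: "M \<in> carrier_mat (length ix) (length ix)" unfolding Mf by simp
  from spectral_radius_mem_max(1)[OF Mc n] obtain ev where
    evM: "eigenvalue M ev" and srev: "spectral_radius M = norm ev"
    unfolding spectrum_def by auto
  from evM obtain v where "eigenvector M v ev" unfolding eigenvalue_def by auto
  from eig_to_fun[OF dix(1) this[unfolded Mf]] obtain u where
    ex: "\<exists>p\<in>set ix. u p \<noteq> 0" and
    eq: "\<And>p. p \<in> set ix \<Longrightarrow> (\<Sum>p'\<in>set ix. f p p' * u p') = ev * u p" by blast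
  have fin: "finite (set ix)" by simp
  have "norm ev < 1"
  proof (cases "\<exists>i\<in>Z. \<exists>a\<le>\<delta> i. u (a, i) \<noteq> 0")
    case True
    then obtain i a0 where iZ: "i \<in> Z" and a0: "a0 \<le> \<delta> i" "u (a0, i) \<noteq> 0" by auto
    have im: "i < m" using iZ Z by auto
    have y0: "y (\<delta> i, i) = 0" using zero iZ .
    have qi: "q i > 0" using q im .
    have ynn: "y (\<delta> k, k) \<ge> 0" if "k < m" for k
      using zero pos that by (cases "k \<in> Z") (auto intro: less_imp_le)
    define S0 where "S0 = (\<Sum>k<m. A i k * y (\<delta> k, k))"
    have S0nn: "S0 \<ge> 0" unfolding S0_def using A_nonneg im ynn by (intro sum_nonneg) auto
    have S0eq: "S0 = (\<Sum>k\<in>{..<m} - Z. A i k * y (\<delta> k, k))"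
      unfolding S0_def using zero by (intro sum.mono_neutral_right) auto
    define Gi where "Gi = cdm_G m lam A q i (cdm_adults \<delta> y)"
    have Gi_eq: "Gi = lam i / (1 + S0 / q i)" unfolding Gi_def cdm_G_def cdm_adults_def S0_def by simp
    define P where "P = (\<Prod>a<\<delta> i. sig a i)"
    have Ppos: "P > 0" unfolding P_def using sig_juv im by (intro prod_pos) auto
    define z where "z = 1 - sig (\<delta> i) i"
    have zpos: "z > 0" using sig_ad im unfolding z_def by auto
    have Dpos: "1 + S0 / q i > 0" using S0nn qi by (simp add: add_pos_nonneg)
    have Gipos: "Gi > 0" unfolding Gi_eq using lam im Dpos by simp
    have c1: "(lam i * P - z) / z < S0 / q i" using cond[OF iZ] S0eq unfolding P_def z_def by simp
    then have "lam i * P - z < z * (S0 / q i)" using zpos by (simp add: pos_divide_less_eq mult.commute)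
    then have "lam i * P < z * (1 + S0 / q i)" by (simp add: algebra_simps)
    then have "lam i * P / (1 + S0 / q i) < z" using Dpos by (simp add: divide_less_eq mult.commute)
    then have GP: "Gi * P + sig (\<delta> i) i < 1" unfolding Gi_eq z_def by (simp add: field_simps)
    have jZ: "\<And>a c. a \<le> \<delta> i \<Longrightarrow> cdm_jac m \<delta> sig lam A q y (a, i) c =
      (if \<delta> i = 0 then (if c = (0, i) then sig 0 i + Gi else 0)
       else if a = 0 then (if c = (\<delta> i, i) then Gi else 0)
       else if a < \<delta> i then (if c = (a - 1, i) then sig (a - 1) i else 0)
       else (if c = (a - 1, i) then sig (a - 1) i else 0) + (if c = (\<delta> i, i) then sig (\<delta> i) i else 0))"
      unfolding Gi_def using jac_Z[where i=i and m=m and y=y and \<delta>=\<delta> and q=q and A=A and sig=sig and lam=lam, OF im y0 qi S0nn[unfolded S0_def]] by blast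
    have inI: "(a, i) \<in> set ix" if "a \<le> \<delta> i" for a using that im I by auto
    show ?thesis
    proof (cases "\<delta> i = 0")
      case True
      have "(\<Sum>p'\<in>set ix. f (0, i) p' * u p') = of_real (sig 0 i + Gi) * u (0, i)"
        unfolding f_def using jZ[of 0] True by (simp add: sum_pt[OF fin inI])
      then have "ev * u (0, i) = of_real (sig 0 i + Gi) * u (0, i)" using eq[OF inI[of 0]] by simp
      moreover have "u (0, i) \<noteq> 0" using a0 True by simp
      ultimately have "ev = of_real (sig 0 i + Gi)" by simp
      moreover have "sig 0 i + Gi < 1" "sig 0 i + Gi > 0" using GP True Gipos sig_ad[OF im]
        by (auto simp: P_def)
      ultimately show ?thesis by (metis norm_of_real of_real_add abs_of_pos)
    next
      case False
      show ?thesis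
      proof (rule leslie[where u = "\<lambda>a. u (a, i)" and s = "\<lambda>a. sig a i" and G = Gi and d = "\<delta> i"])
        show "0 < \<delta> i" using False by simp
        have "(\<Sum>p'\<in>set ix. f (0, i) p' * u p') = of_real Gi * u (\<delta> i, i)"
          unfolding f_def using jZ[of 0] False by (simp add: sum_pt[OF fin inI])
        then show "ev * u (0, i) = of_real Gi * u (\<delta> i, i)" using eq[OF inI[of 0]] by simp
      next
        fix a assume a: "0 < a" "a < \<delta> i"
        have "(\<Sum>p'\<in>set ix. f (a, i) p' * u p') = of_real (sig (a - 1) i) * u (a - 1, i)"
          unfolding f_def using jZ[of a] False a by (simp add: sum_pt[OF fin inI])
        then show "ev * u (a, i) = of_real (sig (a - 1) i) * u (a - 1, i)" using eq[OF inI[of a]] a by simp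
      next
        have ne: "(\<delta> i - 1, i) \<noteq> (\<delta> i, i)" using False by simp
        have "(\<Sum>p'\<in>set ix. f (\<delta> i, i) p' * u p') = (\<Sum>p'\<in>set ix. complex_of_real ((if p' = (\<delta> i - 1, i) then sig (\<delta> i - 1) i else 0) + (if p' = (\<delta> i, i) then sig (\<delta> i) i else 0)) * u p')"
          unfolding f_def using jZ[of "\<delta> i"] False by (intro sum.cong) auto
        also have "\<dots> = of_real (sig (\<delta> i - 1) i) * u (\<delta> i - 1, i) + of_real (sig (\<delta> i) i) * u (\<delta> i, i)"
          by (rule sum_pt2[OF fin inI inI]) auto
        finally have "(\<Sum>p'\<in>set ix. f (\<delta> i, i) p' * u p') = of_real (sig (\<delta> i - 1) i) * u (\<delta> i - 1, i) + of_real (sig (\<delta> i) i) * u (\<delta> i, i)" .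
        then show "ev * u (\<delta> i, i) = of_real (sig (\<delta> i - 1) i) * u (\<delta> i - 1, i) + of_real (sig (\<delta> i) i) * u (\<delta> i, i)"
          using eq[OF inI[of "\<delta> i"]] by simp
      next
        show "\<exists>a\<le>\<delta> i. u (a, i) \<noteq> 0" using a0 by auto
      next
        fix a assume "a < \<delta> i" then show "0 \<le> sig a i" using sig_juv[OF im] by (auto intro: less_imp_le)
      next
        show "0 \<le> sig (\<delta> i) i" using sig_ad[OF im] by auto
      next
        show "0 \<le> Gi" using Gipos by simp
      next
        show "Gi * (\<Prod>a<\<delta> i. sig a i) + sig (\<delta> i) i < 1" using GP unfolding P_def .
      qed
    qed
  next
    case False
    then have uz: "u p = 0" if "p \<in> set ix" "p \<notin> set ixS" for p
      using that I IS by auto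
    have sub_I: "set ixS \<subseteq> set ix" using I IS by auto
    from ex obtain p where p: "p \<in> set ix" "u p \<noteq> 0" by auto
    then have pS: "p \<in> set ixS" using uz by blast
    then have Sne: "{..<m} - Z \<noteq> {}" using IS by auto
    have eqS: "\<forall>p\<in>set ixS. (\<Sum>p'\<in>set ixS. f p p' * u p') = ev * u p"
    proof
      fix p assume p: "p \<in> set ixS"
      have "(\<Sum>p'\<in>set ixS. f p p' * u p') = (\<Sum>p'\<in>set ix. f p p' * u p')"
        using sub_I uz by (intro sum.mono_neutral_left) auto
      also have "\<dots> = ev * u p" using eq[of p] p sub_I by blast
      finally show "(\<Sum>p'\<in>set ixS. f p p' * u p') = ev * u p" .
    qed
    have evS: "eigenvalue MS ev" unfolding MSf
      by (rule fun_to_eig[OF dix(2)]) (use pS p eqS in auto)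
    have nS: "length ixS > 0" using pS by (cases ixS) auto
    have MSc: "MS \<in> carrier_mat (length ixS) (length ixS)" unfolding MSf by simp
    have "norm ev \<le> spectral_radius MS"
      using spectral_radius_mem_max(2)[OF MSc nS] evS unfolding spectrum_def by auto
    also have "\<dots> < 1" using sub[OF Sne] unfolding MS_def .
    finally show ?thesis .
  qed
  then show ?thesis using srev unfolding M_def by simp
qed

end
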